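(* In the Core Tuplix Calculus $\mathbf{CTC}$ over a nonempty attribute set $A$ and a non-trivial cancellation meadow $\mathcal{D}$ (defined in the context), for data variables $u,v$ the identity \[ \gamma(u)\oplus\gamma(u-v)=\gamma(v)\oplus\gamma(u-v) \] is derivable.
   Context: Data: a meadow is a commutative ring with unit with a total unary operation $(\cdot)^{-1}$ satisfying $(u^{-1})^{-1}=u$ and $u\cdot(u\cdot u^{-1})=u$; a non-trivial cancellation meadow additionally satisfies $0\neq 1$ and the cancellation law ($u\neq 0$ and $uv=uw$ imply $v=w$). Fix such a structure $\mathcal{D}$. Data terms are built from data variables, constants $0,1$, binary $+,\cdot$ and unary $-$, $(\cdot)^{-1}$; write $p/q$ for $p\cdot q^{-1}$ and $p-q$ for $p+(-q)$. Fix a nonempty set $A$ of attributes. Tuplix terms are built from tuplix variables, constants $\epsilon$ and $\delta$, entries $a(p)$ ($a\in A$, $p$ a data term), zero tests $\gamma(p)$, and the binary operator $\oplus$. $\mathbf{CTC}$ is the two-sorted equational proof system with axioms (T1) $x\oplus y=y\oplus x$; (T2) $(x\oplus y)\oplus z=x\oplus(y\oplus z)$; (T3) $x\oplus\epsilon=x$; (T4) $x\oplus\delta=\delta$; (T5) $a(u)\oplus a(v)=a(u+v)$; (T6) $\gamma(u)=\gamma(u/u)$; (T7) $\gamma(0)=\epsilon$; (T8) $\gamma(1)=\delta$; (T9) $\gamma(u)\oplus\gamma(v)=\gamma(u/u+v/v)$; (T10) $\gamma(u-v)\oplus a(u)=\gamma(u-v)\oplus a(v)$ (for all $a\in A$),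 together with the rule (DE): for all data terms $p,q$, if $\mathcal{D}\models p=q$ then $\gamma(p)=\gamma(q)$ is derivable. *)

theory Defs
  imports Main
begin

record 'd meadow =
  mzero :: 'd
  mone  :: 'd
  madd  :: "'d \<Rightarrow> 'd \<Rightarrow> 'd"
  mmul  :: "'d \<Rightarrow> 'd \<Rightarrow> 'd"
  mneg  :: "'d \<Rightarrow> 'd"
  minv  :: "'d \<Rightarrow> 'd"

definition is_meadow :: "'d meadow \<Rightarrow> bool" where
  "is_meadow D \<longleftrightarrow>
     (\<forall>x y z. madd D (madd D x y) z = madd D x (madd D y z)) \<and>
     (\<forall>x y. madd D x y = madd D y x) \<and>
     (\<forall>x. madd D x (mzero D) = x) \<and>
     (\<forall>x. madd D x (mneg D x) = mzero D) \<and>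
     (\<forall>x y z. mmul D (mmul D x y) z = mmul D x (mmul D y z)) \<and>
     (\<forall>x y. mmul D x y = mmul D y x) \<and>
     (\<forall>x. mmul D x (mone D) = x) \<and>
     (\<forall>x y z. mmul D x (madd D y z) = madd D (mmul D x y) (mmul D x z)) \<and>
     (\<forall>x. minv D (minv D x) = x) \<and>
     (\<forall>x. mmul D x (mmul D x (minv D x)) = x)"

definition nontrivial_cancellation_meadow :: "'d meadow \<Rightarrow> bool" where
  "nontrivial_cancellation_meadow D \<longleftrightarrow>
     is_meadow D \<and> mzero D \<noteq> mone D \<and>
     (\<forall>x y z. x \<noteq> mzero D \<longrightarrow> mmul D x y = mmul D x z \<longrightarrow> y = z)"

datatype dterm =
    DVar nat
  | DZero
  | DOne
  | DPlus dterm dterm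
  | DTimes dterm dterm
  | DNeg dterm
  | DInv dterm

definition DDiv :: "dterm \<Rightarrow> dterm \<Rightarrow> dterm" where
  "DDiv p q = DTimes p (DInv q)"

definition DMinus :: "dterm \<Rightarrow> dterm \<Rightarrow> dterm" where
  "DMinus p q = DPlus p (DNeg q)"

fun deval :: "'d meadow \<Rightarrow> (nat \<Rightarrow> 'd) \<Rightarrow> dterm \<Rightarrow> 'd" where
  "deval D \<sigma> (DVar n) = \<sigma> n"
| "deval D \<sigma> DZero = mzero D"
| "deval D \<sigma> DOne = mone D"
| "deval D \<sigma> (DPlus p q) = madd D (deval D \<sigma> p) (deval D \<sigma> q)"
| "deval D \<sigma> (DTimes p q) = mmul D (deval D \<sigma> p) (deval D \<sigma> q)"
| "deval D \<sigma> (DNeg p) = mneg D (deval D \<sigma> p)"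
| "deval D \<sigma> (DInv p) = minv D (deval D \<sigma> p)"

definition dvalid :: "'d meadow \<Rightarrow> dterm \<Rightarrow> dterm \<Rightarrow> bool" where
  "dvalid D p q \<longleftrightarrow> (\<forall>\<sigma>. deval D \<sigma> p = deval D \<sigma> q)"

datatype 'a tterm =
    TVar nat
  | Eps
  | Delta
  | Entry 'a dterm
  | Gamma dterm
  | Oplus "'a tterm" "'a tterm"

text \<open>The axioms (T1)--(T10) are given as
  schemata (closed under substitution of arbitrary tuplix terms for tuplix variables
  and arbitrary data terms for data variables); (T10) only for attributes in A.\<close>
inductive ctc :: "'d meadow \<Rightarrow> 'a set \<Rightarrow> 'a tterm \<Rightarrow> 'a tterm \<Rightarrow> bool"
  for D :: "'d meadow" and A :: "'a set" where
  T1: "ctc D A (Oplus x y) (Oplus y x)"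
| T2: "ctc D A (Oplus (Oplus x y) z) (Oplus x (Oplus y z))"
| T3: "ctc D A (Oplus x Eps) x"
| T4: "ctc D A (Oplus x Delta) Delta"
| T5: "a \<in> A \<Longrightarrow> ctc D A (Oplus (Entry a u) (Entry a v)) (Entry a (DPlus u v))"
| T6: "ctc D A (Gamma u) (Gamma (DDiv u u))"
| T7: "ctc D A (Gamma DZero) Eps"
| T8: "ctc D A (Gamma DOne) Delta"
| T9: "ctc D A (Oplus (Gamma u) (Gamma v)) (Gamma (DPlus (DDiv u u) (DDiv v v)))"
| T10: "a \<in> A \<Longrightarrow> ctc D A (Oplus (Gamma (DMinus u v)) (Entry a u))
                                (Oplus (Gamma (DMinus u v)) (Entry a v))"
| DE: "dvalid D p q \<Longrightarrow> ctc D A (Gamma p) (Gamma q)"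
| refl: "ctc D A t t"
| sym: "ctc D A t s \<Longrightarrow> ctc D A s t"
| trans: "ctc D A t s \<Longrightarrow> ctc D A s r \<Longrightarrow> ctc D A t r"
| cong: "ctc D A t t' \<Longrightarrow> ctc D A s s' \<Longrightarrow> ctc D A (Oplus t s) (Oplus t' s')"

end

theory Submission
  imports Defs
begin

lemma ctc_all_delta:
  assumes "ctc D A Eps Delta"
  shows "ctc D A t Delta"
proof -
  have "ctc D A t (Oplus t Eps)" by (rule ctc.sym, rule ctc.T3)
  moreover have "ctc D A (Oplus t Eps) (Oplus t Delta)" by (rule ctc.cong[OF ctc.refl assms])
  moreover have "ctc D A (Oplus t Delta) Delta" by (rule ctc.T4)
  ultimately show ?thesis by (meson ctc.trans)
qed

lemma meadow_facts:
  assumes "nontrivial_cancellation_meadow D"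
  shows "mmul D (mzero D) y = mzero D"
    and "madd D x (mneg D y) = mzero D \<Longrightarrow> x = y"
    and "x \<noteq> mzero D \<Longrightarrow> mmul D x (minv D x) = mone D"
    and "madd D (mzero D) x = x"
proof -
  have M: "is_meadow D" and nz: "mzero D \<noteq> mone D"
    and canc: "\<And>x y z. x \<noteq> mzero D \<Longrightarrow> mmul D x y = mmul D x z \<Longrightarrow> y = z"
    using assms unfolding nontrivial_cancellation_meadow_def by blast+
  note ax = M[unfolded is_meadow_def]
  have aA: "\<And>x y z. madd D (madd D x y) z = madd D x (madd D y z)" using ax by blast
  have aC: "\<And>x y. madd D x y = madd D y x" using ax by blast
  have a0: "\<And>x. madd D x (mzero D) = x" using ax by blast
  have aN: "\<And>x. madd D x (mneg D x) = mzero D" using ax by blast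
  have mC: "\<And>x y. mmul D x y = mmul D y x" using ax by blast
  have m1: "\<And>x. mmul D x (mone D) = x" using ax by blast
  have dist: "\<And>x y z. mmul D x (madd D y z) = madd D (mmul D x y) (mmul D x z)" using ax by blast
  have mi: "\<And>x. mmul D x (mmul D x (minv D x)) = x" using ax by blast
  have z0: "\<And>x. madd D (mzero D) x = x" using aC a0 by metis
  then show "madd D (mzero D) x = x" by blast
  show "mmul D (mzero D) y = mzero D"
  proof -
    let ?a = "mmul D y (mzero D)"
    have "?a = madd D ?a ?a" using dist[of y "mzero D" "mzero D"] a0 by simp
    then have "madd D ?a (mneg D ?a) = madd D ?a (madd D ?a (mneg D ?a))"
      using aA by metis
    then have "?a = mzero D" using aN a0 by metis
    then show ?thesis using mC by metis
  qed
  show "madd D x (mneg D y) = mzero D \<Longrightarrow> x = y"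
  proof -
    assume h: "madd D x (mneg D y) = mzero D"
    have "x = madd D x (madd D (mneg D y) y)" using aN aC a0 by metis
    also have "\<dots> = madd D (madd D x (mneg D y)) y" using aA by metis
    also have "\<dots> = y" using h z0 by simp
    finally show "x = y" .
  qed
  show "x \<noteq> mzero D \<Longrightarrow> mmul D x (minv D x) = mone D"
    using canc mi m1 by metis
qed

theorem lemma3:
  fixes D :: "'d meadow" and A :: "'a set" and u v :: nat
  assumes "nontrivial_cancellation_meadow D"
    and "A \<noteq> {}"
  shows "ctc D A (Oplus (Gamma (DVar u)) (Gamma (DMinus (DVar u) (DVar v))))
                 (Oplus (Gamma (DVar v)) (Gamma (DMinus (DVar u) (DVar v))))"
proof (cases "madd D (mone D) (mone D) = mzero D")
  case True
  have "ctc D A (Oplus (Gamma DOne) (Gamma DOne)) (Gamma (DPlus (DDiv DOne DOne) (DDiv DOne DOne)))"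
    by (rule ctc.T9)
  moreover have "ctc D A (Gamma (DPlus (DDiv DOne DOne) (DDiv DOne DOne))) (Gamma DZero)"
  proof (rule ctc.DE)
    have "mmul D (mone D) (minv D (mone D)) = mone D"
      using meadow_facts(3)[OF assms(1)] assms(1)
      unfolding nontrivial_cancellation_meadow_def by metis
    then show "dvalid D (DPlus (DDiv DOne DOne) (DDiv DOne DOne)) DZero"
      unfolding dvalid_def DDiv_def using True by simp
  qed
  moreover have "ctc D A (Gamma DZero) Eps" by (rule ctc.T7)
  moreover have "ctc D A (Oplus (Gamma DOne) (Gamma DOne)) (Oplus Delta Delta)"
    by (rule ctc.cong[OF ctc.T8 ctc.T8])
  moreover have "ctc D A (Oplus Delta Delta) Delta" by (rule ctc.T4)
  ultimately have ED: "ctc D A Eps Delta" by (meson ctc.trans ctc.sym)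
  show ?thesis using ctc_all_delta[OF ED] by (meson ctc.trans ctc.sym)
next
  case False
  note F = meadow_facts[OF assms(1)]
  have nz: "mzero D \<noteq> mone D" using assms(1) unfolding nontrivial_cancellation_meadow_def by blast
  define e where "e x = mmul D x (minv D x)" for x
  have e0: "e (mzero D) = mzero D" unfolding e_def using F(1) by simp
  have e1: "x \<noteq> mzero D \<Longrightarrow> e x = mone D" for x unfolding e_def using F(3) by simp
  have a0: "madd D x (mzero D) = x" for x using assms(1)
    unfolding nontrivial_cancellation_meadow_def is_meadow_def by blast
  let ?w = "DMinus (DVar u) (DVar v)"
  let ?q = "DPlus (DDiv (DVar u) (DVar u)) (DDiv ?w ?w)"
  let ?q' = "DPlus (DDiv (DVar v) (DVar v)) (DDiv ?w ?w)"
  have "ctc D A (Oplus (Gamma (DVar u)) (Gamma ?w)) (Gamma (DDiv ?q ?q))"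
    by (meson ctc.T9 ctc.T6 ctc.trans)
  moreover have "ctc D A (Oplus (Gamma (DVar v)) (Gamma ?w)) (Gamma (DDiv ?q' ?q'))"
    by (meson ctc.T9 ctc.T6 ctc.trans)
  moreover have "ctc D A (Gamma (DDiv ?q ?q)) (Gamma (DDiv ?q' ?q'))"
  proof (rule ctc.DE)
    show "dvalid D (DDiv ?q ?q) (DDiv ?q' ?q')"
      unfolding dvalid_def
    proof
      fix \<sigma>
      let ?W = "madd D (\<sigma> u) (mneg D (\<sigma> v))"
      show "deval D \<sigma> (DDiv ?q ?q) = deval D \<sigma> (DDiv ?q' ?q')"
      proof (cases "\<sigma> u = \<sigma> v")
        case True then show ?thesis by (simp add: DDiv_def DMinus_def)
      next
        case ne: False
        have W: "?W \<noteq> mzero D" using F(2) ne by blast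
        have eW: "e ?W = mone D" using e1[OF W] .
        have k: "e (madd D (e x) (mone D)) = mone D" for x
        proof (cases "x = mzero D")
          case True then show ?thesis using e0 e1 F(4) nz by metis
        next
          case False then show ?thesis using e1 \<open>madd D (mone D) (mone D) \<noteq> mzero D\<close> by metis
        qed
        show ?thesis using k[of "\<sigma> u"] k[of "\<sigma> v"] eW
          by (simp add: DDiv_def DMinus_def e_def)
      qed
    qed
  qed
  ultimately show ?thesis by (meson ctc.trans ctc.sym)
qed

end
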